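(* The maps $\eta:\widetilde{S}_{AB}\to\mathfrak{S}_A$, $\inf^{\widetilde{S}_{AB}}_{i\in I}\sigma_{i,A}\widetilde{\otimes}\sigma_{i,B}\mapsto\inf^{\mathfrak{S}_A}_{i\in I}\sigma_{i,A}$ and $\lambda:\widetilde{S}_{AB}\to\mathfrak{S}_B$, $\inf^{\widetilde{S}_{AB}}_{i\in I}\sigma_{i,A}\widetilde{\otimes}\sigma_{i,B}\mapsto\inf^{\mathfrak{S}_B}_{i\in I}\sigma_{i,B}$ are (well-defined) Inf semi-lattice homomorphisms.
   Context: $\mathfrak{B}=\{\mathbf{Y},\mathbf{N},\bot\}$ with meet $\wedge$ and product $\bullet$ ($x\bullet\mathbf{Y}=x$, $x\bullet\mathbf{N}=\mathbf{N}$, $\bot\bullet\bot=\bot$). $(\mathfrak{S}_A,\mathfrak{E}_A,\epsilon^{\mathfrak{S}_A})$, $(\mathfrak{S}_B,\mathfrak{E}_B,\epsilon^{\mathfrak{S}_B})$ are States/Effects Chu spaces (down-complete Inf semi-lattices, infima written $\inf$, evaluation maps preserving infima in each variable, a constant-$\mathbf{Y}$ effect $\mathfrak{Y}_{\mathfrak{E}}$ in each). The minimal tensor product $\widetilde{S}_{AB}$ consists of the maps $\inf^{\widetilde{S}_{AB}}_{i\in I}\sigma_{i,A}\widetilde{\otimes}\sigma_{i,B}:(\mathfrak{l}_A,\mathfrak{l}_B)\mapsto\bigwedge_{i\in I}\epsilon^{\mathfrak{S}_A}_{\mathfrak{l}_A}(\sigma_{i,A})\bullet\epsilon^{\mathfrak{S}_B}_{\mathfrak{l}_B}(\sigma_{i,B})$,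 ordered pointwise. *)

theory Defs
  imports Main
begin

datatype B3 = Yb | Nb | Botb

instantiation B3 :: order
begin
definition less_eq_B3 :: "B3 \<Rightarrow> B3 \<Rightarrow> bool" where
  "less_eq_B3 x y \<longleftrightarrow> x = Botb \<or> x = y"
definition less_B3 :: "B3 \<Rightarrow> B3 \<Rightarrow> bool" where
  "less_B3 x y \<longleftrightarrow> x \<le> y \<and> x \<noteq> y"
instance by standard (auto simp: less_eq_B3_def less_B3_def)
end

definition bmeet :: "B3 set \<Rightarrow> B3" where
  "bmeet S = (if S \<subseteq> {Yb} then Yb else if S \<subseteq> {Nb} then Nb else Botb)"

fun bprod :: "B3 \<Rightarrow> B3 \<Rightarrow> B3" where
  "bprod x Yb = x"
| "bprod x Nb = Nb"
| "bprod Yb Botb = Botb"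
| "bprod Nb Botb = Nb"
| "bprod Botb Botb = Botb"

definition is_glb_on :: "'a::order set \<Rightarrow> 'a set \<Rightarrow> 'a \<Rightarrow> bool" where
  "is_glb_on C S x \<longleftrightarrow> x \<in> C \<and> (\<forall>y\<in>S. x \<le> y) \<and> (\<forall>z\<in>C. (\<forall>y\<in>S. z \<le> y) \<longrightarrow> z \<le> x)"

definition ginf_on :: "'a::order set \<Rightarrow> 'a set \<Rightarrow> 'a" where
  "ginf_on C S = (THE x. is_glb_on C S x)"

abbreviation ginf :: "'a::order set \<Rightarrow> 'a" where
  "ginf S \<equiv> ginf_on UNIV S"

text \<open>eps l s is the evaluation of effect l on state s; Yeff is the constant-Y effect.\<close>
definition SE_Chu :: "('e::order \<Rightarrow> 's::order \<Rightarrow> B3) \<Rightarrow> 'e \<Rightarrow> bool" where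
  "SE_Chu eps Yeff \<longleftrightarrow>
     (\<forall>S::'s set. S \<noteq> {} \<longrightarrow> (\<exists>x. is_glb_on UNIV S x)) \<and>
     (\<forall>L::'e set. L \<noteq> {} \<longrightarrow> (\<exists>x. is_glb_on UNIV L x)) \<and>
     (\<forall>l S. S \<noteq> {} \<longrightarrow> eps l (ginf S) = bmeet (eps l ` S)) \<and>
     (\<forall>L s. L \<noteq> {} \<longrightarrow> eps (ginf L) s = bmeet ((\<lambda>l. eps l s) ` L)) \<and>
     (\<forall>s. eps Yeff s = Yb) \<and>
     (\<forall>s s'. (\<forall>l. eps l s = eps l s') \<longrightarrow> s = s')"

text \<open>The element inf_{(a,b) in F} a \<otimes> b, for a nonempty set F of pairs of states.\<close>
definition min_tensor ::
  "('ea \<Rightarrow> 'sa \<Rightarrow> B3) \<Rightarrow> ('eb \<Rightarrow> 'sb \<Rightarrow> B3) \<Rightarrow> ('sa \<times> 'sb) set \<Rightarrow> 'ea \<Rightarrow> 'eb \<Rightarrow> B3" where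
  "min_tensor epsA epsB F = (\<lambda>la lb. bmeet ((\<lambda>(a, b). bprod (epsA la a) (epsB lb b)) ` F))"

definition Stilde ::
  "('ea \<Rightarrow> 'sa \<Rightarrow> B3) \<Rightarrow> ('eb \<Rightarrow> 'sb \<Rightarrow> B3) \<Rightarrow> ('ea \<Rightarrow> 'eb \<Rightarrow> B3) set" where
  "Stilde epsA epsB = {min_tensor epsA epsB F | F. F \<noteq> {}}"

end

theory Submission
  imports Defs
begin

lemma bmeet_glb: assumes ne: "S \<noteq> {}" shows "is_glb_on UNIV S (bmeet S)"
proof (cases "S \<subseteq> {Yb}")
  case True
  from ne obtain y where "y \<in> S" by blast
  then have "Yb \<in> S" using True by auto
  then show ?thesis using True unfolding is_glb_on_def bmeet_def less_eq_B3_def by auto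
next
  case F1: False
  show ?thesis
  proof (cases "S \<subseteq> {Nb}")
    case True
    then show ?thesis using F1 unfolding is_glb_on_def bmeet_def less_eq_B3_def by auto
  next
    case False
      have "\<forall>z. (\<forall>y\<in>S. z = Botb \<or> z = y) \<longrightarrow> z = Botb"
    proof (intro allI impI)
      fix z assume h: "\<forall>y\<in>S. z = Botb \<or> z = y"
      show "z = Botb"
      proof (rule ccontr)
        assume "z \<noteq> Botb"
        then have "S \<subseteq> {z}" using h by auto
        then show False using F1 False ne \<open>z \<noteq> Botb\<close> by (cases z) auto
      qed
    qed
    then show ?thesis using F1 False unfolding is_glb_on_def bmeet_def less_eq_B3_def by auto
  qed
qed

lemma glb_unique: "is_glb_on C S x \<Longrightarrow> is_glb_on C S y \<Longrightarrow> x = y"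
  unfolding is_glb_on_def by (blast intro: order_antisym)

lemma ginf_eq: "is_glb_on C S x \<Longrightarrow> ginf_on C S = x"
  unfolding ginf_on_def by (rule the_equality) (auto intro: glb_unique)

lemma bmeet_Y: "bmeet X = Yb \<longleftrightarrow> X \<subseteq> {Yb}"
  unfolding bmeet_def by simp

lemma bmeet_N: "X \<noteq> {} \<Longrightarrow> bmeet X = Nb \<longleftrightarrow> X \<subseteq> {Nb}"
  unfolding bmeet_def by auto

lemma bmeet_cases: "bmeet X = Yb \<or> bmeet X = Nb \<or> bmeet X = Botb"
  by (cases "bmeet X") simp_all

lemma bmeet_UN:
  assumes "I \<noteq> {}" "\<forall>i\<in>I. S i \<noteq> {}"
  shows "bmeet (\<Union>i\<in>I. S i) = bmeet ((\<lambda>i. bmeet (S i)) ` I)"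
proof -
  have ne: "(\<Union>i\<in>I. S i) \<noteq> {}" using assms by blast
  have ne2: "(\<lambda>i. bmeet (S i)) ` I \<noteq> {}" using assms by blast
  have Y: "(\<Union>i\<in>I. S i) \<subseteq> {Yb} \<longleftrightarrow> (\<lambda>i. bmeet (S i)) ` I \<subseteq> {Yb}"
  proof -
    have 1: "(\<Union>i\<in>I. S i) \<subseteq> {Yb} \<longleftrightarrow> (\<forall>i\<in>I. S i \<subseteq> {Yb})" by blast
    have 2: "(\<forall>i\<in>I. S i \<subseteq> {Yb}) \<longleftrightarrow> (\<forall>i\<in>I. bmeet (S i) = Yb)"
      by (simp add: bmeet_Y)
    have 3: "(\<lambda>i. bmeet (S i)) ` I \<subseteq> {Yb} \<longleftrightarrow> (\<forall>i\<in>I. bmeet (S i) = Yb)" by blast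
    show ?thesis using 1 2 3 by blast
  qed
  have N: "(\<Union>i\<in>I. S i) \<subseteq> {Nb} \<longleftrightarrow> (\<lambda>i. bmeet (S i)) ` I \<subseteq> {Nb}"
  proof -
    have 1: "(\<Union>i\<in>I. S i) \<subseteq> {Nb} \<longleftrightarrow> (\<forall>i\<in>I. S i \<subseteq> {Nb})" by blast
    have 2: "(\<forall>i\<in>I. S i \<subseteq> {Nb}) \<longleftrightarrow> (\<forall>i\<in>I. bmeet (S i) = Nb)"
      using assms(2) by (simp add: bmeet_N)
    have 3: "(\<lambda>i. bmeet (S i)) ` I \<subseteq> {Nb} \<longleftrightarrow> (\<forall>i\<in>I. bmeet (S i) = Nb)" by blast
    show ?thesis using 1 2 3 by blast
  qed
  have "bmeet (\<Union>i\<in>I. S i) = (if (\<Union>i\<in>I. S i) \<subseteq> {Yb} then Yb else if (\<Union>i\<in>I. S i) \<subseteq> {Nb} then Nb else Botb)"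
    by (rule bmeet_def)
  also have "\<dots> = (if (\<lambda>i. bmeet (S i)) ` I \<subseteq> {Yb} then Yb else if (\<lambda>i. bmeet (S i)) ` I \<subseteq> {Nb} then Nb else Botb)"
    using Y N by presburger
  also have "\<dots> = bmeet ((\<lambda>i. bmeet (S i)) ` I)"
    by (rule bmeet_def[symmetric])
  finally show ?thesis .
qed

lemma bprod_Y1: "bprod Yb x = x" by (cases x) auto

lemma fun_glb:
  fixes T :: "('a \<Rightarrow> 'b \<Rightarrow> B3) set"
  assumes "T \<noteq> {}" "T \<subseteq> C" "(\<lambda>la lb. bmeet ((\<lambda>t. t la lb) ` T)) \<in> C"
  shows "is_glb_on C T (\<lambda>la lb. bmeet ((\<lambda>t. t la lb) ` T))"
proof -
  have g: "is_glb_on UNIV ((\<lambda>t. t la lb) ` T) (bmeet ((\<lambda>t. t la lb) ` T))" for la lb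
    using bmeet_glb assms(1) by simp
  show ?thesis unfolding is_glb_on_def
  proof (intro conjI ballI impI)
    show "(\<lambda>la lb. bmeet ((\<lambda>t. t la lb) ` T)) \<in> C" by fact
  next
    fix y assume "y \<in> T"
    then show "(\<lambda>la lb. bmeet ((\<lambda>t. t la lb) ` T)) \<le> y"
      using g unfolding is_glb_on_def le_fun_def by blast
  next
    fix z assume "z \<in> C" "\<forall>y\<in>T. z \<le> y"
    then show "z \<le> (\<lambda>la lb. bmeet ((\<lambda>t. t la lb) ` T))"
      using g unfolding is_glb_on_def le_fun_def by auto
  qed
qed

lemma G_in_Stilde:
  assumes "T \<noteq> {}" "T \<subseteq> Stilde epsA epsB"
  shows "(\<lambda>la lb. bmeet ((\<lambda>t. t la lb) ` T)) \<in> Stilde epsA epsB"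
proof -
  have "\<forall>t\<in>T. \<exists>F. F \<noteq> {} \<and> t = min_tensor epsA epsB F"
    using assms unfolding Stilde_def by blast
  then obtain Fs where Fs: "\<And>t. t \<in> T \<Longrightarrow> Fs t \<noteq> {} \<and> t = min_tensor epsA epsB (Fs t)"
    using bchoice[of T "\<lambda>t F. F \<noteq> {} \<and> t = min_tensor epsA epsB F"] by blast
  have Fne: "\<forall>t\<in>T. Fs t \<noteq> {}" using Fs by blast
  let ?U = "\<Union>t\<in>T. Fs t"
  have "?U \<noteq> {}" using Fne assms(1) by auto
  moreover have "min_tensor epsA epsB ?U = (\<lambda>la lb. bmeet ((\<lambda>t. t la lb) ` T))"
  proof (intro ext)
    fix la lb
    let ?f = "\<lambda>(a, b). bprod (epsA la a) (epsB lb b)"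
    have "min_tensor epsA epsB ?U la lb = bmeet (\<Union>t\<in>T. ?f ` Fs t)"
      unfolding min_tensor_def by (simp add: image_UN)
    also have "\<dots> = bmeet ((\<lambda>t. bmeet (?f ` Fs t)) ` T)"
      using bmeet_UN[of T "\<lambda>t. ?f ` Fs t"] assms(1) Fne by auto
    also have "\<dots> = bmeet ((\<lambda>t. t la lb) ` T)"
    proof -
      have "(\<lambda>t. bmeet (?f ` Fs t)) ` T = (\<lambda>t. t la lb) ` T"
      proof (rule image_cong[OF refl])
        fix t assume "t \<in> T"
        then have "t la lb = min_tensor epsA epsB (Fs t) la lb" using Fs by metis
        then show "bmeet (?f ` Fs t) = t la lb" by (simp add: min_tensor_def)
      qed
      then show ?thesis by simp
    qed
    finally show "min_tensor epsA epsB ?U la lb = bmeet ((\<lambda>t. t la lb) ` T)" .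
  qed
  ultimately have "\<exists>F. (\<lambda>la lb. bmeet ((\<lambda>t. t la lb) ` T)) = min_tensor epsA epsB F \<and> F \<noteq> {}"
    by (intro exI[of _ ?U] conjI) (rule sym, assumption+)
  then show ?thesis unfolding Stilde_def by (simp only: mem_Collect_eq)
qed

lemma ginf_eval:
  assumes "SE_Chu eps Y" "S \<noteq> {}"
  shows "eps l (ginf S) = bmeet (eps l ` S)"
  using assms unfolding SE_Chu_def by blast

lemma sep:
  assumes "SE_Chu eps Y" "\<And>l. eps l s = eps l s'"
  shows "s = s'"
  using assms unfolding SE_Chu_def by blast

lemma Yeval: "SE_Chu eps Y \<Longrightarrow> eps Y s = Yb"
  unfolding SE_Chu_def by blast

theorem mainTheorem7:
  fixes epsA :: "'ea::order \<Rightarrow> 'sa::order \<Rightarrow> B3" and YA :: 'ea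
    and epsB :: "'eb::order \<Rightarrow> 'sb::order \<Rightarrow> B3" and YB :: 'eb
  assumes "SE_Chu epsA YA" and "SE_Chu epsB YB"
  shows "(\<forall>T. T \<noteq> {} \<and> T \<subseteq> Stilde epsA epsB \<longrightarrow>
            (\<exists>t. is_glb_on (Stilde epsA epsB) T t))
       \<and> (\<exists>eta :: ('ea \<Rightarrow> 'eb \<Rightarrow> B3) \<Rightarrow> 'sa.
            (\<forall>F. F \<noteq> {} \<longrightarrow> eta (min_tensor epsA epsB F) = ginf (fst ` F)) \<and>
            (\<forall>T. T \<noteq> {} \<and> T \<subseteq> Stilde epsA epsB \<longrightarrow>
                 eta (ginf_on (Stilde epsA epsB) T) = ginf (eta ` T)))
       \<and> (\<exists>lam :: ('ea \<Rightarrow> 'eb \<Rightarrow> B3) \<Rightarrow> 'sb.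
            (\<forall>F. F \<noteq> {} \<longrightarrow> lam (min_tensor epsA epsB F) = ginf (snd ` F)) \<and>
            (\<forall>T. T \<noteq> {} \<and> T \<subseteq> Stilde epsA epsB \<longrightarrow>
                 lam (ginf_on (Stilde epsA epsB) T) = ginf (lam ` T)))"
proof (intro conjI)
  note A = assms(1) and B = assms(2)
  have glbT: "ginf_on (Stilde epsA epsB) T = (\<lambda>la lb. bmeet ((\<lambda>t. t la lb) ` T))"
    if "T \<noteq> {}" "T \<subseteq> Stilde epsA epsB" for T
    by (rule ginf_eq[OF fun_glb[OF that G_in_Stilde[OF that]]])
  show "\<forall>T. T \<noteq> {} \<and> T \<subseteq> Stilde epsA epsB \<longrightarrow> (\<exists>t. is_glb_on (Stilde epsA epsB) T t)"
  proof (intro allI impI)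
    fix T assume T: "T \<noteq> {} \<and> T \<subseteq> Stilde epsA epsB"
    then have T1: "T \<noteq> {}" and T2: "T \<subseteq> Stilde epsA epsB" by simp_all
    show "\<exists>t. is_glb_on (Stilde epsA epsB) T t"
      by (rule exI, rule fun_glb[OF T1 T2 G_in_Stilde[OF T1 T2]])
  qed
  have inS: "t \<in> Stilde epsA epsB \<Longrightarrow> \<exists>F. F \<noteq> {} \<and> t = min_tensor epsA epsB F" for t
    unfolding Stilde_def by (simp add: conj_commute)
  define eta where "eta = (\<lambda>t :: 'ea \<Rightarrow> 'eb \<Rightarrow> B3. SOME s. \<forall>la. epsA la s = t la YB)"
  have mtA: "min_tensor epsA epsB F la YB = epsA la (ginf (fst ` F))" if "F \<noteq> {}" for F la
  proof -
    have "(\<lambda>(a, b). bprod (epsA la a) (epsB YB b)) ` F = epsA la ` fst ` F"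
      using Yeval[OF B] by (force simp: image_image split_beta)
    then show ?thesis unfolding min_tensor_def using ginf_eval[OF A] that by simp
  qed
  have etaF: "eta (min_tensor epsA epsB F) = ginf (fst ` F)" if "F \<noteq> {}" for F
  proof -
    have h: "\<forall>la. epsA la (eta (min_tensor epsA epsB F)) = min_tensor epsA epsB F la YB"
      unfolding eta_def by (rule someI[where x="ginf (fst ` F)"]) (simp add: mtA that)
    show ?thesis
    proof (rule sep[OF A])
      fix l show "epsA l (eta (min_tensor epsA epsB F)) = epsA l (ginf (fst ` F))"
        using h mtA[OF that] by simp
    qed
  qed
  have etaP: "epsA la (eta t) = t la YB" if tS: "t \<in> Stilde epsA epsB" for t la
  proof -
    obtain F where F: "F \<noteq> {}" "t = min_tensor epsA epsB F" using inS[OF tS] by blast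
    show ?thesis unfolding F(2) etaF[OF F(1)] mtA[OF F(1)] ..
  qed
  show "\<exists>eta :: ('ea \<Rightarrow> 'eb \<Rightarrow> B3) \<Rightarrow> 'sa.
            (\<forall>F. F \<noteq> {} \<longrightarrow> eta (min_tensor epsA epsB F) = ginf (fst ` F)) \<and>
            (\<forall>T. T \<noteq> {} \<and> T \<subseteq> Stilde epsA epsB \<longrightarrow>
                 eta (ginf_on (Stilde epsA epsB) T) = ginf (eta ` T))"
  proof (intro exI conjI allI impI)
    fix F :: "('sa \<times> 'sb) set" assume "F \<noteq> {}" then show "eta (min_tensor epsA epsB F) = ginf (fst ` F)"
      by (rule etaF)
  next
    fix T assume T: "T \<noteq> {} \<and> T \<subseteq> Stilde epsA epsB"
    then have T1: "T \<noteq> {}" and T2: "T \<subseteq> Stilde epsA epsB" by simp_all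
    have Gin: "(\<lambda>la lb. bmeet ((\<lambda>t. t la lb) ` T)) \<in> Stilde epsA epsB"
      by (rule G_in_Stilde[OF T1 T2])
    show "eta (ginf_on (Stilde epsA epsB) T) = ginf (eta ` T)"
    proof (rule sep[OF A])
      fix la
      have "epsA la (eta (ginf_on (Stilde epsA epsB) T)) = bmeet ((\<lambda>t. t la YB) ` T)"
        unfolding glbT[OF T1 T2] etaP[OF Gin] ..
      also have "(\<lambda>t. t la YB) ` T = epsA la ` eta ` T"
        unfolding image_image
      proof (rule image_cong[OF refl])
        fix t assume "t \<in> T"
        then have "t \<in> Stilde epsA epsB" using T2 by blast
        then show "t la YB = epsA la (eta t)" by (rule etaP[symmetric])
      qed
      also have "bmeet (epsA la ` eta ` T) = epsA la (ginf (eta ` T))"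
        using ginf_eval[OF A, of "eta ` T" la] T1 by simp
      finally show "epsA la (eta (ginf_on (Stilde epsA epsB) T)) = epsA la (ginf (eta ` T))" .
    qed
  qed
  define lam where "lam = (\<lambda>t :: 'ea \<Rightarrow> 'eb \<Rightarrow> B3. SOME s. \<forall>lb. epsB lb s = t YA lb)"
  have mtB: "min_tensor epsA epsB F YA lb = epsB lb (ginf (snd ` F))" if "F \<noteq> {}" for F lb
  proof -
    have "(\<lambda>(a, b). bprod (epsA YA a) (epsB lb b)) ` F = epsB lb ` snd ` F"
      using Yeval[OF A] by (force simp: image_image split_beta bprod_Y1)
    then show ?thesis unfolding min_tensor_def using ginf_eval[OF B] that by simp
  qed
  have lamF: "lam (min_tensor epsA epsB F) = ginf (snd ` F)" if "F \<noteq> {}" for F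
  proof -
    have h: "\<forall>lb. epsB lb (lam (min_tensor epsA epsB F)) = min_tensor epsA epsB F YA lb"
      unfolding lam_def by (rule someI[where x="ginf (snd ` F)"]) (simp add: mtB that)
    show ?thesis
    proof (rule sep[OF B])
      fix l show "epsB l (lam (min_tensor epsA epsB F)) = epsB l (ginf (snd ` F))"
        using h mtB[OF that] by simp
    qed
  qed
  have lamP: "epsB lb (lam t) = t YA lb" if tS: "t \<in> Stilde epsA epsB" for t lb
  proof -
    obtain F where F: "F \<noteq> {}" "t = min_tensor epsA epsB F" using inS[OF tS] by blast
    show ?thesis unfolding F(2) lamF[OF F(1)] mtB[OF F(1)] ..
  qed
  show "\<exists>lam :: ('ea \<Rightarrow> 'eb \<Rightarrow> B3) \<Rightarrow> 'sb.
            (\<forall>F. F \<noteq> {} \<longrightarrow> lam (min_tensor epsA epsB F) = ginf (snd ` F)) \<and>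
            (\<forall>T. T \<noteq> {} \<and> T \<subseteq> Stilde epsA epsB \<longrightarrow>
                 lam (ginf_on (Stilde epsA epsB) T) = ginf (lam ` T))"
  proof (intro exI conjI allI impI)
    fix F :: "('sa \<times> 'sb) set" assume "F \<noteq> {}" then show "lam (min_tensor epsA epsB F) = ginf (snd ` F)"
      by (rule lamF)
  next
    fix T assume T: "T \<noteq> {} \<and> T \<subseteq> Stilde epsA epsB"
    then have T1: "T \<noteq> {}" and T2: "T \<subseteq> Stilde epsA epsB" by simp_all
    have Gin: "(\<lambda>la lb. bmeet ((\<lambda>t. t la lb) ` T)) \<in> Stilde epsA epsB"
      by (rule G_in_Stilde[OF T1 T2])
    show "lam (ginf_on (Stilde epsA epsB) T) = ginf (lam ` T)"
    proof (rule sep[OF B])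
      fix lb
      have "epsB lb (lam (ginf_on (Stilde epsA epsB) T)) = bmeet ((\<lambda>t. t YA lb) ` T)"
        unfolding glbT[OF T1 T2] lamP[OF Gin] ..
      also have "(\<lambda>t. t YA lb) ` T = epsB lb ` lam ` T"
        unfolding image_image
      proof (rule image_cong[OF refl])
        fix t assume "t \<in> T"
        then have "t \<in> Stilde epsA epsB" using T2 by blast
        then show "t YA lb = epsB lb (lam t)" by (rule lamP[symmetric])
      qed
      also have "bmeet (epsB lb ` lam ` T) = epsB lb (ginf (lam ` T))"
        using ginf_eval[OF B, of "lam ` T" lb] T1 by simp
      finally show "epsB lb (lam (ginf_on (Stilde epsA epsB) T)) = epsB lb (ginf (lam ` T))" .
    qed
  qed
qed

end
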